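(* Let $\Phi: H_n\to H_k$ be a trace-preserving unital linear map and let $\rho\in H_n\otimes H_m$ be Hermitian. Then \[ {\rm Tr}\left[\left((\Phi\otimes\mathrm{id})(\rho)\right)^2\right]\leq\left(\frac1k-\frac{\|A_\Phi\|_\infty}{n}\right){\rm Tr}\left[\rho_K^2\right]+\|A_\Phi\|_\infty\,{\rm Tr}\left[\rho^2\right], \] where $\mathrm{id}$ is the identity map on $H_m$ and $\rho_K={\rm Tr}_{H_n}[\rho]\in H_m$ is the partial trace over the first factor.
   Context: $H_n$ is the real vector space of $n\times n$ Hermitian matrices with inner product ${\rm Tr}(XY)$, and $H_{n,0}$ its subspace of traceless matrices. A linear map $\Phi:H_n\to H_k$ is unital if $\Phi(I_n/n)=I_k/k$. Fix an orthonormal basis $M_1,\dots,M_{n^2-1}$ of $H_{n,0}$ and define the real symmetric positive semidefinite matrix $A_\Phi$ by $(A_\Phi)_{i,j}={\rm Tr}[\Phi(M_i)\Phi(M_j)]$, $1\le i,j\le n^2-1$; $\|A_\Phi\|_\infty$ is its largest eigenvalue (independent of the chosen basis). *)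

theory Defs
  imports "Jordan_Normal_Form.Matrix" "Jordan_Normal_Form.Char_Poly" "HOL.Complex"
begin

definition mtrace :: "'a::comm_ring_1 mat \<Rightarrow> 'a" where
  "mtrace A = (\<Sum>i<dim_row A. A $$ (i, i))"

definition Herm :: "nat \<Rightarrow> complex mat set" where
  "Herm n = {A \<in> carrier_mat n n. \<forall>i<n. \<forall>j<n. A $$ (i, j) = cnj (A $$ (j, i))}"

definition Herm0 :: "nat \<Rightarrow> complex mat set" where
  "Herm0 n = {A \<in> Herm n. mtrace A = 0}"

definition herm_linear_map :: "nat \<Rightarrow> nat \<Rightarrow> (complex mat \<Rightarrow> complex mat) \<Rightarrow> bool" where
  "herm_linear_map n k \<Phi> \<longleftrightarrow>
     (\<forall>X\<in>Herm n. \<Phi> X \<in> Herm k) \<and>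
     (\<forall>X\<in>Herm n. \<forall>Y\<in>Herm n. \<forall>a b :: real.
        \<Phi> (complex_of_real a \<cdot>\<^sub>m X + complex_of_real b \<cdot>\<^sub>m Y)
          = complex_of_real a \<cdot>\<^sub>m \<Phi> X + complex_of_real b \<cdot>\<^sub>m \<Phi> Y)"

definition trace_preserving :: "nat \<Rightarrow> (complex mat \<Rightarrow> complex mat) \<Rightarrow> bool" where
  "trace_preserving n \<Phi> \<longleftrightarrow> (\<forall>X\<in>Herm n. mtrace (\<Phi> X) = mtrace X)"

definition unital :: "nat \<Rightarrow> nat \<Rightarrow> (complex mat \<Rightarrow> complex mat) \<Rightarrow> bool" where
  "unital n k \<Phi> \<longleftrightarrow>
     \<Phi> (complex_of_real (1 / real n) \<cdot>\<^sub>m 1\<^sub>m n) = complex_of_real (1 / real k) \<cdot>\<^sub>m 1\<^sub>m k"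

definition adj :: "complex mat \<Rightarrow> complex mat" where
  "adj A = mat (dim_col A) (dim_row A) (\<lambda>(i, j). cnj (A $$ (j, i)))"

(* complex-linear extension of Phi from H_n to all n x n complex matrices:
   X = H + i K, H = (X + adj X)/2, K = (X - adj X)/(2i) Hermitian *)
definition cext :: "(complex mat \<Rightarrow> complex mat) \<Rightarrow> complex mat \<Rightarrow> complex mat" where
  "cext \<Phi> X = \<Phi> ((1/2) \<cdot>\<^sub>m (X + adj X)) + \<i> \<cdot>\<^sub>m \<Phi> ((1 / (2 * \<i>)) \<cdot>\<^sub>m (X - adj X))"

(* H_n (x) H_m realised as (n*m) x (n*m) matrices, index (i,a) <-> i*m + a (Kronecker order).
   block rho a b = (I (x) <a|) rho (I (x) |b>) *)
definition block2 :: "nat \<Rightarrow> nat \<Rightarrow> complex mat \<Rightarrow> nat \<Rightarrow> nat \<Rightarrow> complex mat" where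
  "block2 n m \<rho> a b = mat n n (\<lambda>(i, j). \<rho> $$ (i * m + a, j * m + b))"

(* (Phi (x) id)(rho) = sum_{a,b} Phi(block a b) (x) |a><b| *)
definition tensor_id :: "nat \<Rightarrow> nat \<Rightarrow> nat \<Rightarrow> (complex mat \<Rightarrow> complex mat) \<Rightarrow> complex mat \<Rightarrow> complex mat" where
  "tensor_id n k m \<Phi> \<rho> = mat (k * m) (k * m)
     (\<lambda>(r, s). cext \<Phi> (block2 n m \<rho> (r mod m) (s mod m)) $$ (r div m, s div m))"

definition ptrace1 :: "nat \<Rightarrow> nat \<Rightarrow> complex mat \<Rightarrow> complex mat" where
  "ptrace1 n m \<rho> = mat m m (\<lambda>(a, b). \<Sum>i<n. \<rho> $$ (i * m + a, i * m + b))"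

definition onb_Herm0 :: "nat \<Rightarrow> (nat \<Rightarrow> complex mat) \<Rightarrow> bool" where
  "onb_Herm0 n M \<longleftrightarrow>
     (\<forall>i < n^2 - 1. M i \<in> Herm0 n) \<and>
     (\<forall>i < n^2 - 1. \<forall>j < n^2 - 1. mtrace (M i * M j) = (if i = j then 1 else 0)) \<and>
     (\<forall>X\<in>Herm0 n. \<exists>c :: nat \<Rightarrow> real. \<forall>p<n. \<forall>q<n.
        X $$ (p, q) = (\<Sum>i < n^2 - 1. complex_of_real (c i) * M i $$ (p, q)))"

definition A_mat :: "nat \<Rightarrow> (complex mat \<Rightarrow> complex mat) \<Rightarrow> (nat \<Rightarrow> complex mat) \<Rightarrow> real mat" where
  "A_mat n \<Phi> M = mat (n^2 - 1) (n^2 - 1) (\<lambda>(i, j). Re (mtrace (\<Phi> (M i) * \<Phi> (M j))))"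

definition lambda_max :: "real mat \<Rightarrow> real" where
  "lambda_max A = Max {l. eigenvalue A l}"

end

theory Submission
  imports Defs "HOL-Analysis.Function_Topology"
begin


definition qf :: "nat \<Rightarrow> real mat \<Rightarrow> (nat \<Rightarrow> real) \<Rightarrow> real" where
 "qf N A x = (\<Sum>i<N. \<Sum>j<N. x i * A $$ (i,j) * x j)"
definition nf :: "nat \<Rightarrow> (nat \<Rightarrow> real) \<Rightarrow> real" where
 "nf N x = (\<Sum>i<N. (x i)^2)"

lemma qf_expand: "qf N A (\<lambda>i. x i + t * y i) = qf N A x + t * ((\<Sum>i<N. \<Sum>j<N. x i * A$$(i,j) * y j) + (\<Sum>i<N. \<Sum>j<N. y i * A$$(i,j) * x j)) + t^2 * qf N A y"
proof -
  have e: "\<And>i j. (x i + t*y i) * A$$(i,j) * (x j + t*y j) = x i * A$$(i,j) * x j + t*(x i * A$$(i,j) * y j) + t*(y i * A$$(i,j) * x j) + t^2 * (y i * A$$(i,j) * y j)"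
    by (simp add: algebra_simps power2_eq_square)
  show ?thesis unfolding qf_def apply (simp only: e) by (simp only: sum.distrib sum_distrib_left distrib_left add.assoc)
qed

lemma nf_expand: "nf N (\<lambda>i. x i + t * y i) = nf N x + 2 * t * (\<Sum>i<N. x i * y i) + t^2 * nf N y"
proof -
  have e: "\<And>i. (x i + t*y i)^2 = (x i)^2 + 2 * t * (x i * y i) + t^2 * (y i)^2"
    by (simp add: algebra_simps power2_eq_square)
  show ?thesis unfolding nf_def apply (simp only: e) by (simp only: sum.distrib sum_distrib_left mult.assoc)
qed

lemma quad_zero:
  fixes a b :: real
  assumes "\<And>t. a * t + b * t^2 \<le> 0" shows "a = 0"
proof (rule ccontr)
  assume a: "a \<noteq> 0"
  define s where "s = 1 / (\<bar>b\<bar> + 1)"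
  have s: "s > 0" "\<bar>b\<bar> * s < 1" unfolding s_def by (auto simp: field_simps)
  have "a * (s * a) + b * (s * a)^2 \<le> 0" by (rule assms)
  hence "a^2 * (s * (1 + b * s)) \<le> 0" by (simp add: algebra_simps power2_eq_square)
  moreover have "a^2 > 0" using a by simp
  moreover have "1 + b * s > 0"
  proof -
    have e: "\<bar>b * s\<bar> = \<bar>b\<bar> * s" using s(1) by (simp add: abs_mult)
    have "- \<bar>b * s\<bar> \<le> b * s" by linarith
    thus ?thesis using s(2) e by linarith
  qed
  ultimately have "a^2 * (s * (1 + b * s)) > 0" using s(1) by (intro mult_pos_pos) auto
  thus False using \<open>a^2 * (s * (1 + b * s)) \<le> 0\<close> by linarith
qed

lemma nf_nonneg: "nf N x \<ge> 0" unfolding nf_def by (simp add: sum_nonneg)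

lemma exists_max:
  fixes A :: "real mat" assumes N: "N > 0"
  shows "\<exists>x0. nf N x0 = 1 \<and> (\<forall>x. nf N x = 1 \<longrightarrow> qf N A x \<le> qf N A x0)"
proof -
  define X where "X = product_topology (\<lambda>_. euclideanreal) {..<N}"
  define S where "S = {x \<in> topspace X. nf N x \<in> {1}}"
  define K where "K = PiE {..<N} (\<lambda>_. {-1..1::real})"
  have cnf: "continuous_map X euclideanreal (nf N)"
    unfolding nf_def X_def by (auto intro!: continuous_intros)
  have cqf: "continuous_map X euclideanreal (qf N A)"
    unfolding qf_def X_def by (auto intro!: continuous_intros)
  have cl: "closedin X S" unfolding S_def by (rule closedin_continuous_map_preimage[OF cnf]) auto
  have cK: "compactin X K" unfolding K_def X_def by (subst compactin_PiE) auto
  have SK: "S \<subseteq> K"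
  proof
    fix x assume x: "x \<in> S"
    hence x1: "x \<in> PiE {..<N} (\<lambda>_. UNIV)" and n1: "nf N x = 1"
      unfolding S_def X_def by (auto simp: topspace_product_topology)
    have "\<bar>x i\<bar> \<le> 1" if i: "i < N" for i
    proof -
      have "(x i)^2 \<le> nf N x" unfolding nf_def
        by (rule member_le_sum[where f="\<lambda>i. (x i)^2"]) (use i in auto)
      thus ?thesis using n1 by (simp add: abs_square_le_1)
    qed
    thus "x \<in> K" using x1 unfolding K_def by (auto simp: PiE_def Pi_def abs_le_iff)
  qed
  have cS: "compactin X S" by (rule closed_compactin[OF cK SK cl])
  have "compactin euclideanreal (qf N A ` S)" by (rule image_compactin[OF cS cqf])
  hence cimg: "compact (qf N A ` S)" by simp
  define e where "e = restrict (\<lambda>i. if i = 0 then 1 else 0::real) {..<N}"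
  have "nf N e = 1" unfolding nf_def e_def using N
    by (simp add: if_distrib[of "\<lambda>x. x^2"] cong: if_cong)
  hence eS: "e \<in> S" unfolding S_def X_def e_def by (auto simp: topspace_product_topology)
  obtain s where s: "s \<in> qf N A ` S" "\<forall>t\<in>qf N A ` S. t \<le> s"
    using compact_attains_sup[OF cimg] eS by blast
  then obtain x0 where x0: "x0 \<in> S" "s = qf N A x0" by auto
  have "nf N x0 = 1" using x0 unfolding S_def by auto
  moreover have "qf N A x \<le> qf N A x0" if "nf N x = 1" for x
  proof -
    define x' where "x' = restrict x {..<N}"
    have "nf N x' = nf N x" "qf N A x' = qf N A x" unfolding x'_def nf_def qf_def by auto
    hence "x' \<in> S" using that unfolding S_def X_def x'_def by (auto simp: topspace_product_topology)
    thus ?thesis using s x0 \<open>qf N A x' = qf N A x\<close> by force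
  qed
  ultimately show ?thesis by blast
qed


lemma sum_delta_r: "p < (N::nat) \<Longrightarrow> (\<Sum>j<N. f j * (if j = p then 1 else (0::'a::comm_semiring_1))) = f p"
proof -
  assume p: "p < N"
  have "(\<Sum>j<N. f j * (if j = p then 1 else (0::'a))) = (\<Sum>j<N. if j = p then f j else 0)"
    by (rule sum.cong) auto
  moreover have "(\<Sum>j<N. if j = p then f j else 0) = f p"
    using p by (subst sum.delta) auto
  ultimately show ?thesis by simp
qed

lemma sum_delta_l: "p < (N::nat) \<Longrightarrow> (\<Sum>j<N. (if j = p then 1 else (0::'a::comm_semiring_1)) * f j) = f p"
  using sum_delta_r[of p N f] by (simp add: mult.commute)

lemma rayleigh:
  fixes A :: "real mat"
  assumes A: "A \<in> carrier_mat N N"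
    and sym: "\<And>i j. i < N \<Longrightarrow> j < N \<Longrightarrow> A$$(i,j) = A$$(j,i)" and N: "N > 0"
  shows "qf N A x \<le> lambda_max A * nf N x"
proof -
  obtain x0 where x0: "nf N x0 = 1" "\<And>x. nf N x = 1 \<Longrightarrow> qf N A x \<le> qf N A x0"
    using exists_max[OF N, of A] by blast
  define \<mu> where "\<mu> = qf N A x0"
  have bound: "qf N A y \<le> \<mu> * nf N y" for y
  proof (cases "nf N y = 0")
    case True
    hence "\<forall>i\<in>{..<N}. (y i)^2 = 0" unfolding nf_def by (subst sum_nonneg_eq_0_iff[symmetric]) auto
    hence "qf N A y = 0" unfolding qf_def by simp
    thus ?thesis using True by simp
  next
    case False
    hence pos: "nf N y > 0" using nf_nonneg[of N y] by linarith
    define c where "c = sqrt (nf N y)"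
    have c: "c > 0" "c^2 = nf N y" using pos unfolding c_def by auto
    define z where "z = (\<lambda>i. y i / c)"
    have "nf N z = nf N y / c^2" unfolding nf_def z_def by (simp add: power_divide sum_divide_distrib)
    hence "nf N z = 1" using c pos by simp
    hence "qf N A z \<le> \<mu>" using x0 unfolding \<mu>_def by blast
    moreover have "qf N A z = qf N A y / c^2" unfolding qf_def z_def
      by (simp add: sum_divide_distrib power2_eq_square)
    ultimately show ?thesis using c pos by (simp add: divide_le_eq mult.commute)
  qed
  have eig: "(\<Sum>j<N. A$$(p,j) * x0 j) = \<mu> * x0 p" if p: "p < N" for p
  proof -
    define e where "e = (\<lambda>i. if i = p then 1 else 0::real)"
    define w where "w = (\<Sum>j<N. A$$(p,j) * x0 j)"
    have c1: "(\<Sum>i<N. \<Sum>j<N. x0 i * A$$(i,j) * e j) = w"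
      unfolding e_def w_def using p
      apply (simp only: sum_delta_r)
      apply (rule sum.cong)
      by (auto simp: mult.commute intro: sym)
    have c2: "(\<Sum>i<N. \<Sum>j<N. e i * A$$(i,j) * x0 j) = w"
      unfolding e_def w_def using p by (simp add: sum_distrib_left[symmetric] mult.assoc sum_delta_l)
    have qe: "qf N A e = A$$(p,p)" unfolding qf_def e_def using p by (simp add: sum_delta_r sum_delta_l)
    have ne: "nf N e = 1" unfolding nf_def e_def using p by (simp add: if_distrib[of "\<lambda>x. x^2"] cong: if_cong)
    have xe: "(\<Sum>i<N. x0 i * e i) = x0 p" unfolding e_def using p by (simp add: sum_delta_r)
    have "2 * (w - \<mu> * x0 p) * t + (A$$(p,p) - \<mu>) * t^2 \<le> 0" for t
    proof -
      have "qf N A (\<lambda>i. x0 i + t * e i) \<le> \<mu> * nf N (\<lambda>i. x0 i + t * e i)" by (rule bound)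
      thus ?thesis unfolding qf_expand nf_expand c1 c2 qe ne xe x0(1) \<mu>_def[symmetric]
        by (simp add: algebra_simps)
    qed
    hence "2 * (w - \<mu> * x0 p) = 0" by (rule quad_zero)
    thus ?thesis unfolding w_def by simp
  qed
  define v where "v = vec N x0"
  have v: "v \<in> carrier_vec N" unfolding v_def by simp
  have Av: "A *\<^sub>v v = \<mu> \<cdot>\<^sub>v v"
  proof (rule eq_vecI)
    fix p assume "p < dim_vec (\<mu> \<cdot>\<^sub>v v)"
    hence p: "p < N" unfolding v_def by simp
    have "(A *\<^sub>v v) $ p = (\<Sum>j<N. A$$(p,j) * x0 j)"
      using A p unfolding v_def by (simp add: scalar_prod_def atLeast0LessThan)
    thus "(A *\<^sub>v v) $ p = (\<mu> \<cdot>\<^sub>v v) $ p" using eig[OF p] p unfolding v_def by simp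
  qed (use A v in simp)
  have v0: "v \<noteq> 0\<^sub>v N"
  proof
    assume "v = 0\<^sub>v N"
    hence "\<forall>i<N. x0 i = 0" unfolding v_def by (metis index_vec index_zero_vec(1))
    hence "nf N x0 = 0" unfolding nf_def by simp
    thus False using x0 by simp
  qed
  have evmu: "eigenvalue A \<mu>" unfolding eigenvalue_def eigenvector_def using A v v0 Av by auto
  have le: "l \<le> \<mu>" if ev: "eigenvalue A l" for l
  proof -
    obtain u where u: "u \<in> carrier_vec N" "u \<noteq> 0\<^sub>v N" "A *\<^sub>v u = l \<cdot>\<^sub>v u"
      using ev A carrier_matD(1)[OF A] unfolding eigenvalue_def eigenvector_def by metis
    define y where "y = (\<lambda>i. u $ i)"
    have row: "(\<Sum>j<N. A$$(i,j) * y j) = l * y i" if i: "i < N" for i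
    proof -
      have "(A *\<^sub>v u) $ i = (\<Sum>j<N. A$$(i,j) * y j)"
        using A u(1) i unfolding y_def by (simp add: scalar_prod_def atLeast0LessThan)
      moreover have "(A *\<^sub>v u) $ i = l * y i" using u i unfolding y_def by (simp add: carrier_vecD)
      ultimately show ?thesis by simp
    qed
    have "qf N A y = (\<Sum>i<N. y i * (\<Sum>j<N. A$$(i,j) * y j))"
      unfolding qf_def by (simp add: sum_distrib_left mult.assoc)
    also have "\<dots> = (\<Sum>i<N. l * (y i)^2)" by (rule sum.cong) (auto simp: row power2_eq_square)
    also have "\<dots> = l * nf N y" unfolding nf_def by (simp add: sum_distrib_left)
    finally have q: "qf N A y = l * nf N y" .
    have "nf N y \<noteq> 0"
    proof
      assume "nf N y = 0"
      hence "\<forall>i\<in>{..<N}. (y i)^2 = 0" unfolding nf_def by (subst sum_nonneg_eq_0_iff[symmetric]) auto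
      hence "u = 0\<^sub>v N" using u unfolding y_def by (intro eq_vecI) auto
      thus False using u by simp
    qed
    hence pos: "nf N y > 0" using nf_nonneg[of N y] by linarith
    from bound[of y] q pos show ?thesis by simp
  qed
  have fin: "finite {l. eigenvalue A l}"
  proof -
    have "char_poly A \<noteq> 0" using degree_monic_char_poly[OF A] by auto
    hence "finite {l. poly (char_poly A) l = 0}" by (rule poly_roots_finite)
    thus ?thesis using eigenvalue_root_char_poly[OF A] by simp
  qed
  have "lambda_max A = \<mu>" unfolding lambda_max_def
    by (rule Max_eqI[OF fin]) (use le evmu in auto)
  thus ?thesis using bound by simp
qed



lemma trace_lin:
  fixes a :: "nat \<Rightarrow> 'a::comm_ring_1"
  shows "(\<Sum>p<d. \<Sum>q<d. (\<Sum>i<N. a i * f i p q) * (\<Sum>j<N. a j * f j q p))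
       = (\<Sum>i<N. \<Sum>j<N. a i * a j * (\<Sum>p<d. \<Sum>q<d. f i p q * f j q p))"
proof -
  have "(\<Sum>p<d. \<Sum>q<d. (\<Sum>i<N. a i * f i p q) * (\<Sum>j<N. a j * f j q p))
      = (\<Sum>p<d. \<Sum>q<d. \<Sum>i<N. \<Sum>j<N. a i * a j * (f i p q * f j q p))"
    by (simp add: sum_product mult_ac)
  also have "\<dots> = (\<Sum>p<d. \<Sum>i<N. \<Sum>q<d. \<Sum>j<N. a i * a j * (f i p q * f j q p))"
    by (simp add: sum.swap[of _ "{..<d}" "{..<N}"])
  also have "\<dots> = (\<Sum>i<N. \<Sum>p<d. \<Sum>q<d. \<Sum>j<N. a i * a j * (f i p q * f j q p))"
    by (rule sum.swap)
  also have "\<dots> = (\<Sum>i<N. \<Sum>p<d. \<Sum>j<N. \<Sum>q<d. a i * a j * (f i p q * f j q p))"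
    by (simp add: sum.swap[of _ "{..<d}" "{..<N}"])
  also have "\<dots> = (\<Sum>i<N. \<Sum>j<N. \<Sum>p<d. \<Sum>q<d. a i * a j * (f i p q * f j q p))"
    by (simp add: sum.swap[of _ "{..<d}" "{..<N}"])
  also have "\<dots> = (\<Sum>i<N. \<Sum>j<N. a i * a j * (\<Sum>p<d. \<Sum>q<d. f i p q * f j q p))"
    by (simp add: sum_distrib_left)
  finally show ?thesis .
qed

lemma cross_sum:
  "(\<Sum>p<d. \<Sum>q<d. (u p q + \<i> * v p q) * (u q p - \<i> * v q p))
   = (\<Sum>p<d. \<Sum>q<d. u p q * u q p) + (\<Sum>p<d. \<Sum>q<d. v p q * v q p)"
proof -
  have e: "\<And>p q. (u p q + \<i> * v p q) * (u q p - \<i> * v q p) = u p q * u q p + v p q * v q p + \<i> * (v p q * u q p) - \<i> * (u p q * v q p)"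
    by (simp add: algebra_simps)
  have sw: "(\<Sum>p<d. \<Sum>q<d. v p q * u q p) = (\<Sum>p<d. \<Sum>q<d. u p q * v q p)"
    by (subst sum.swap) (simp add: mult.commute)
  show ?thesis unfolding e by (simp add: sum.distrib sum_subtractf sum_distrib_left[symmetric] sw)
qed

lemma delta_sum:
  fixes z :: "nat \<Rightarrow> nat \<Rightarrow> 'a::comm_ring_1"
  shows "(\<Sum>p<d. \<Sum>q<d. ((if p = q then c else 0) + z p q) * ((if q = p then c else 0) + z q p))
   = of_nat d * c^2 + 2 * c * (\<Sum>p<d. z p p) + (\<Sum>p<d. \<Sum>q<d. z p q * z q p)"
proof -
  have e: "\<And>p q. ((if p = q then c else 0) + z p q) * ((if q = p then c else 0) + z q p)
     = (if q = p then c^2 + c * z p p + c * z p p else 0) + z p q * z q p"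
    by (auto simp: algebra_simps power2_eq_square)
  have "\<And>p. p < d \<Longrightarrow> (\<Sum>q<d. (if q = p then c^2 + c * z p p + c * z p p else 0)) = c^2 + 2 * c * z p p"
    by (simp add: algebra_simps)
  hence "(\<Sum>p<d. \<Sum>q<d. (if q = p then c^2 + c * z p p + c * z p p else 0)) = (\<Sum>p<d. c^2 + 2 * c * z p p)"
    by (intro sum.cong) auto
  thus ?thesis unfolding e by (simp add: sum.distrib sum_distrib_left)
qed

lemma reindex_sum: "(\<Sum>r<(k::nat)*m. g r) = (\<Sum>p<k. \<Sum>a<m. g (p*m+a))"
proof (induction k)
  case 0 thus ?case by simp
next
  case (Suc k)
  have "{..<Suc k * m} = {..<k*m} \<union> {k*m..<k*m+m}" by auto
  hence "(\<Sum>r<Suc k*m. g r) = (\<Sum>r<k*m. g r) + (\<Sum>r\<in>{k*m..<k*m+m}. g r)"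
    by (simp add: sum.union_disjoint ivl_disj_int)
  also have "(\<Sum>r\<in>{k*m..<k*m+m}. g r) = (\<Sum>a<m. g (k*m+a))"
  proof -
    have "(\<Sum>r\<in>{k*m..<k*m+m}. g r) = (\<Sum>a\<in>{0..<m}. g (a + k*m))"
      using sum.shift_bounds_nat_ivl[of g 0 "k*m" m] by (simp add: add.commute)
    thus ?thesis by (simp add: atLeast0LessThan add.commute)
  qed
  finally show ?case using Suc by simp
qed


lemma mtrace_mult:
  assumes "A \<in> carrier_mat d e" "B \<in> carrier_mat e d"
  shows "mtrace (A * B) = (\<Sum>i<d. \<Sum>j<e. A$$(i,j) * B$$(j,i))"
  using assms unfolding mtrace_def by (auto simp: scalar_prod_def atLeast0LessThan intro!: sum.cong)

lemma mtrace_comm: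
  assumes "A \<in> carrier_mat d e" "B \<in> carrier_mat e d"
  shows "mtrace (A * B) = mtrace (B * A)"
  unfolding mtrace_mult[OF assms] mtrace_mult[OF assms(2,1)]
  by (subst sum.swap) (simp add: mult.commute)

lemma HermD:
  assumes "X \<in> Herm d"
  shows "X \<in> carrier_mat d d" "\<And>i j. i < d \<Longrightarrow> j < d \<Longrightarrow> X$$(i,j) = cnj (X$$(j,i))"
  using assms unfolding Herm_def by blast+

lemma Herm_trace_real:
  assumes "X \<in> Herm d"
  shows "mtrace X = complex_of_real (Re (mtrace X))"
proof -
  have dr: "dim_row X = d" using HermD(1)[OF assms] by auto
  have "\<forall>i<d. Im (X$$(i,i)) = 0"
  proof (intro allI impI)
    fix i assume "i < d"
    hence "X$$(i,i) = cnj (X$$(i,i))" by (intro HermD(2)[OF assms])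
    hence "Im (X$$(i,i)) = Im (cnj (X$$(i,i)))" by (rule arg_cong)
    thus "Im (X$$(i,i)) = 0" by simp
  qed
  hence "Im (mtrace X) = 0" unfolding mtrace_def dr by (simp add: Im_sum)
  thus ?thesis by (simp add: complex_eq_iff)
qed

lemma HermI:
  assumes "X \<in> carrier_mat d d" "\<And>i j. i < d \<Longrightarrow> j < d \<Longrightarrow> X$$(i,j) = cnj (X$$(j,i))"
  shows "X \<in> Herm d"
  using assms unfolding Herm_def by blast

lemma Herm_add:
  assumes X: "X \<in> Herm d" and Y: "Y \<in> Herm d" shows "X + Y \<in> Herm d"
proof (rule HermI)
  have Xc: "X \<in> carrier_mat d d" and Yc: "Y \<in> carrier_mat d d" using HermD(1) X Y by auto
  thus "X + Y \<in> carrier_mat d d" by simp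
  fix i j assume ij: "i < d" "j < d"
  have "(X + Y)$$(i,j) = X$$(i,j) + Y$$(i,j)" "(X + Y)$$(j,i) = X$$(j,i) + Y$$(j,i)"
    using Xc Yc ij by auto
  thus "(X + Y)$$(i,j) = cnj ((X + Y)$$(j,i))"
    using HermD(2)[OF X ij] HermD(2)[OF Y ij] by simp
qed

lemma Herm_smult:
  assumes X: "X \<in> Herm d" shows "complex_of_real a \<cdot>\<^sub>m X \<in> Herm d"
proof (rule HermI)
  have Xc: "X \<in> carrier_mat d d" using HermD(1) X by auto
  thus "complex_of_real a \<cdot>\<^sub>m X \<in> carrier_mat d d" by simp
  fix i j assume ij: "i < d" "j < d"
  have "(complex_of_real a \<cdot>\<^sub>m X)$$(i,j) = complex_of_real a * X$$(i,j)"
     "(complex_of_real a \<cdot>\<^sub>m X)$$(j,i) = complex_of_real a * X$$(j,i)"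
    using Xc ij by auto
  thus "(complex_of_real a \<cdot>\<^sub>m X)$$(i,j) = cnj ((complex_of_real a \<cdot>\<^sub>m X)$$(j,i))"
    using HermD(2)[OF X ij] by simp
qed

lemma phi_herm: "herm_linear_map n k \<Phi> \<Longrightarrow> X \<in> Herm n \<Longrightarrow> \<Phi> X \<in> Herm k"
  unfolding herm_linear_map_def by auto

lemma phi_carrier: "herm_linear_map n k \<Phi> \<Longrightarrow> X \<in> Herm n \<Longrightarrow> \<Phi> X \<in> carrier_mat k k"
  using phi_herm HermD(1) by blast

lemma phi_lin: "herm_linear_map n k \<Phi> \<Longrightarrow> X \<in> Herm n \<Longrightarrow> Y \<in> Herm n \<Longrightarrow>
   \<Phi> (complex_of_real a \<cdot>\<^sub>m X + complex_of_real b \<cdot>\<^sub>m Y) = complex_of_real a \<cdot>\<^sub>m \<Phi> X + complex_of_real b \<cdot>\<^sub>m \<Phi> Y"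
  unfolding herm_linear_map_def by blast

lemma phi_smult:
  assumes lin: "herm_linear_map n k \<Phi>" and X: "X \<in> Herm n"
  shows "\<Phi> (complex_of_real a \<cdot>\<^sub>m X) = complex_of_real a \<cdot>\<^sub>m \<Phi> X"
proof -
  have Xc: "X \<in> carrier_mat n n" using HermD(1)[OF X] .
  have Pc: "\<Phi> X \<in> carrier_mat k k" using phi_carrier[OF lin X] .
  have "complex_of_real a \<cdot>\<^sub>m X + complex_of_real 0 \<cdot>\<^sub>m X = complex_of_real a \<cdot>\<^sub>m X"
    using Xc by (intro eq_matI) auto
  moreover have "complex_of_real a \<cdot>\<^sub>m \<Phi> X + complex_of_real 0 \<cdot>\<^sub>m \<Phi> X = complex_of_real a \<cdot>\<^sub>m \<Phi> X"
    using Pc by (intro eq_matI) auto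
  ultimately show ?thesis using phi_lin[OF lin X X, of a 0] by simp
qed

lemma phi_add:
  assumes lin: "herm_linear_map n k \<Phi>" and X: "X \<in> Herm n" and Y: "Y \<in> Herm n"
  shows "\<Phi> (X + Y) = \<Phi> X + \<Phi> Y"
proof -
  have Xc: "X \<in> carrier_mat n n" using HermD(1)[OF X] .
  have Yc: "Y \<in> carrier_mat n n" using HermD(1)[OF Y] .
  have Pc: "\<Phi> X \<in> carrier_mat k k" using phi_carrier[OF lin X] .
  have Qc: "\<Phi> Y \<in> carrier_mat k k" using phi_carrier[OF lin Y] .
  have "complex_of_real 1 \<cdot>\<^sub>m X + complex_of_real 1 \<cdot>\<^sub>m Y = X + Y"
    using Xc Yc by (intro eq_matI) auto
  moreover have "complex_of_real 1 \<cdot>\<^sub>m \<Phi> X + complex_of_real 1 \<cdot>\<^sub>m \<Phi> Y = \<Phi> X + \<Phi> Y"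
    using Pc Qc by (intro eq_matI) auto
  ultimately show ?thesis using phi_lin[OF lin X Y, of 1 1] by simp
qed

lemma S_lemma:
  fixes M :: "nat \<Rightarrow> complex mat" and j N :: nat and c :: "nat \<Rightarrow> real"
  assumes lin: "herm_linear_map n k \<Phi>" and Mh: "\<And>i. i < N \<Longrightarrow> M i \<in> Herm n"
  shows "j \<le> N \<Longrightarrow> mat n n (\<lambda>pq. \<Sum>i<j. complex_of_real (c i) * M i $$ pq) \<in> Herm n \<and>
     \<Phi> (mat n n (\<lambda>pq. \<Sum>i<j. complex_of_real (c i) * M i $$ pq))
       = mat k k (\<lambda>pq. \<Sum>i<j. complex_of_real (c i) * \<Phi> (M i) $$ pq)"
proof (induction j)
  case 0
  define S0 where "S0 = mat n n (\<lambda>_. 0::complex)"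
  have S0: "S0 \<in> Herm n" unfolding S0_def by (rule HermI) auto
  have Pc: "\<Phi> S0 \<in> carrier_mat k k" using phi_carrier[OF lin S0] .
  have "complex_of_real 0 \<cdot>\<^sub>m S0 = S0" unfolding S0_def by (intro eq_matI) auto
  moreover have "complex_of_real 0 \<cdot>\<^sub>m \<Phi> S0 = mat k k (\<lambda>_. 0)" using Pc by (intro eq_matI) auto
  ultimately have "\<Phi> S0 = mat k k (\<lambda>_. 0)" using phi_smult[OF lin S0, of 0] by simp
  thus ?case using S0 unfolding S0_def by simp
next
  case (Suc j)
  define Sj where "Sj = mat n n (\<lambda>pq. \<Sum>i<j. complex_of_real (c i) * M i $$ pq)"
  have j: "j < N" using Suc.prems by simp
  have IH: "Sj \<in> Herm n" "\<Phi> Sj = mat k k (\<lambda>pq. \<Sum>i<j. complex_of_real (c i) * \<Phi> (M i) $$ pq)"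
    using Suc.IH Suc.prems unfolding Sj_def by auto
  have Mj: "M j \<in> Herm n" using Mh[OF j] .
  have Mjc: "M j \<in> carrier_mat n n" using HermD(1)[OF Mj] .
  have PMj: "\<Phi> (M j) \<in> carrier_mat k k" using phi_carrier[OF lin Mj] .
  have eq: "mat n n (\<lambda>pq. \<Sum>i<Suc j. complex_of_real (c i) * M i $$ pq) = Sj + complex_of_real (c j) \<cdot>\<^sub>m M j"
    unfolding Sj_def using Mjc by (intro eq_matI) auto
  have h: "complex_of_real (c j) \<cdot>\<^sub>m M j \<in> Herm n" using Herm_smult[OF Mj] .
  have "\<Phi> (Sj + complex_of_real (c j) \<cdot>\<^sub>m M j) = \<Phi> Sj + complex_of_real (c j) \<cdot>\<^sub>m \<Phi> (M j)"
    using phi_add[OF lin IH(1) h] phi_smult[OF lin Mj] by simp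
  also have "\<dots> = mat k k (\<lambda>pq. \<Sum>i<Suc j. complex_of_real (c i) * \<Phi> (M i) $$ pq)"
    unfolding IH(2) using PMj by (intro eq_matI) auto
  finally show ?case unfolding eq using Herm_add[OF IH(1) h] by simp
qed



lemma sum_delta_r': "p < (N::nat) \<Longrightarrow> (\<Sum>j<N. f j * (if p = j then 1 else (0::'a::comm_semiring_1))) = f p"
  using sum_delta_r[of p N f] by (simp add: eq_commute[of p])

lemma Re_cc: "Re (complex_of_real a * complex_of_real b * z) = a * b * Re z" by simp

lemma herm0_bound:
  assumes lin: "herm_linear_map n k \<Phi>" and onb: "onb_Herm0 n M" and X0: "X0 \<in> Herm0 n"
  shows "Re (mtrace (\<Phi> X0 * \<Phi> X0)) \<le> lambda_max (A_mat n \<Phi> M) * Re (mtrace (X0 * X0))"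
proof -
  define N where "N = n^2 - 1"
  define Am where "Am = A_mat n \<Phi> M"
  have Mh0: "\<forall>i < N. M i \<in> Herm0 n" using onb unfolding onb_Herm0_def N_def by (elim conjE)
  hence Mh: "\<And>i. i < N \<Longrightarrow> M i \<in> Herm n" unfolding Herm0_def by blast
  have orth0: "\<forall>i < N. \<forall>j < N. mtrace (M i * M j) = (if i = j then 1 else 0)"
    using onb unfolding onb_Herm0_def N_def by (elim conjE)
  hence orth: "\<And>i j. i < N \<Longrightarrow> j < N \<Longrightarrow> mtrace (M i * M j) = (if i = j then 1 else 0)" by blast
  have X0h: "X0 \<in> Herm n" using X0 unfolding Herm0_def by blast
  have X0c: "X0 \<in> carrier_mat n n" using HermD(1)[OF X0h] .
  obtain c :: "nat \<Rightarrow> real" where c: "\<And>p q. p < n \<Longrightarrow> q < n \<Longrightarrow> X0 $$ (p,q) = (\<Sum>i<N. complex_of_real (c i) * M i $$ (p,q))"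
  proof -
    have "\<forall>X\<in>Herm0 n. \<exists>c :: nat \<Rightarrow> real. \<forall>p<n. \<forall>q<n.
        X $$ (p, q) = (\<Sum>i < N. complex_of_real (c i) * M i $$ (p, q))"
      using onb unfolding onb_Herm0_def N_def by (elim conjE)
    then obtain c :: "nat \<Rightarrow> real" where "\<forall>p<n. \<forall>q<n. X0 $$ (p, q) = (\<Sum>i < N. complex_of_real (c i) * M i $$ (p, q))"
      using X0 by blast
    thus ?thesis using that by blast
  qed
  have X0eq: "X0 = mat n n (\<lambda>pq. \<Sum>i<N. complex_of_real (c i) * M i $$ pq)"
    using X0c c by (intro eq_matI) auto
  have PX: "\<Phi> X0 = mat k k (\<lambda>pq. \<Sum>i<N. complex_of_real (c i) * \<Phi> (M i) $$ pq)"
    using S_lemma[OF lin Mh, where j=N and c=c] X0eq by simp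
  have FC: "\<And>i. i < N \<Longrightarrow> \<Phi> (M i) \<in> carrier_mat k k" using phi_carrier[OF lin Mh] by blast
  have MC: "\<And>i. i < N \<Longrightarrow> M i \<in> carrier_mat n n" using HermD(1)[OF Mh] by blast
  have "mtrace (\<Phi> X0 * \<Phi> X0) = (\<Sum>p<k. \<Sum>q<k. (\<Sum>i<N. complex_of_real (c i) * \<Phi> (M i) $$ (p,q)) * (\<Sum>j<N. complex_of_real (c j) * \<Phi> (M j) $$ (q,p)))"
    unfolding PX by (subst mtrace_mult[of _ k k]) (auto intro!: sum.cong)
  also have "\<dots> = (\<Sum>i<N. \<Sum>j<N. complex_of_real (c i) * complex_of_real (c j) * (\<Sum>p<k. \<Sum>q<k. \<Phi> (M i) $$ (p,q) * \<Phi> (M j) $$ (q,p)))"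
    by (rule trace_lin)
  also have "\<dots> = (\<Sum>i<N. \<Sum>j<N. complex_of_real (c i) * complex_of_real (c j) * mtrace (\<Phi> (M i) * \<Phi> (M j)))"
    by (intro sum.cong refl) (simp add: mtrace_mult[OF FC FC])
  finally have T1: "mtrace (\<Phi> X0 * \<Phi> X0) = \<dots>" .
  have "mtrace (X0 * X0) = (\<Sum>p<n. \<Sum>q<n. (\<Sum>i<N. complex_of_real (c i) * M i $$ (p,q)) * (\<Sum>j<N. complex_of_real (c j) * M j $$ (q,p)))"
    unfolding X0eq by (subst mtrace_mult[of _ n n]) (auto intro!: sum.cong)
  also have "\<dots> = (\<Sum>i<N. \<Sum>j<N. complex_of_real (c i) * complex_of_real (c j) * (\<Sum>p<n. \<Sum>q<n. M i $$ (p,q) * M j $$ (q,p)))"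
    by (rule trace_lin)
  also have "\<dots> = (\<Sum>i<N. \<Sum>j<N. complex_of_real (c i) * complex_of_real (c j) * mtrace (M i * M j))"
    by (intro sum.cong refl) (simp add: mtrace_mult[OF MC MC])
  finally have T2: "mtrace (X0 * X0) = \<dots>" .
  have Am_idx: "\<And>i j. i < N \<Longrightarrow> j < N \<Longrightarrow> Am $$ (i,j) = Re (mtrace (\<Phi> (M i) * \<Phi> (M j)))"
    unfolding Am_def A_mat_def N_def by simp
  have Amc: "Am \<in> carrier_mat N N" unfolding Am_def A_mat_def N_def by simp
  have R1: "Re (mtrace (\<Phi> X0 * \<Phi> X0)) = qf N Am c"
    unfolding T1 qf_def Re_sum Re_cc by (intro sum.cong refl) (simp add: Am_idx)
  have R2: "Re (mtrace (X0 * X0)) = nf N c"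
  proof -
    have "Re (mtrace (X0 * X0)) = (\<Sum>i<N. \<Sum>j<N. c i * c j * (if i = j then 1 else 0))"
      unfolding T2 Re_sum Re_cc by (intro sum.cong refl) (simp add: orth)
    also have "\<dots> = (\<Sum>i<N. (c i)^2)"
      by (intro sum.cong refl) (simp add: sum_delta_r' power2_eq_square)
    finally show ?thesis unfolding nf_def .
  qed
  show ?thesis
  proof (cases "N = 0")
    case True
    thus ?thesis unfolding R1 R2 qf_def nf_def by simp
  next
    case False
    have sym: "\<And>i j. i < N \<Longrightarrow> j < N \<Longrightarrow> Am $$ (i,j) = Am $$ (j,i)"
      using Am_idx mtrace_comm[OF FC FC] by metis
    show ?thesis unfolding R1 R2 Am_def[symmetric] using rayleigh[OF Amc sym] False by simp
  qed
qed



lemma herm_bound: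
  assumes n: "n > 0" and k: "k > 0" and lin: "herm_linear_map n k \<Phi>"
    and tp: "trace_preserving n \<Phi>" and un: "unital n k \<Phi>" and onb: "onb_Herm0 n M"
    and X: "X \<in> Herm n"
  shows "Re (mtrace (\<Phi> X * \<Phi> X)) \<le> (1 / real k - lambda_max (A_mat n \<Phi> M) / real n) * (Re (mtrace X))^2
      + lambda_max (A_mat n \<Phi> M) * Re (mtrace (X * X))"
proof -
  define lam where "lam = lambda_max (A_mat n \<Phi> M)"
  define t where "t = Re (mtrace X)"
  have Xc: "X \<in> carrier_mat n n" using HermD(1)[OF X] .
  have trX: "mtrace X = complex_of_real t" using Herm_trace_real[OF X] unfolding t_def .
  define cn where "cn = complex_of_real (t / real n)"
  define ck where "ck = complex_of_real (t / real k)"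
  define X0 where "X0 = mat n n (\<lambda>(i,j). X$$(i,j) - (if i = j then cn else 0))"
  have X0c: "X0 \<in> carrier_mat n n" unfolding X0_def by simp
  have X0idx: "\<And>i j. i < n \<Longrightarrow> j < n \<Longrightarrow> X0$$(i,j) = X$$(i,j) - (if i = j then cn else 0)"
    unfolding X0_def by simp
  have X0h: "X0 \<in> Herm n"
  proof (rule HermI[OF X0c])
    fix i j assume ij: "i < n" "j < n"
    have "X$$(i,j) = cnj (X$$(j,i))" by (rule HermD(2)[OF X ij])
    thus "X0$$(i,j) = cnj (X0$$(j,i))" using ij unfolding X0idx[OF ij] X0idx[OF ij(2,1)] cn_def by auto
  qed
  have trX0: "mtrace X0 = 0"
  proof -
    have "mtrace X0 = (\<Sum>i<n. X$$(i,i) - cn)" unfolding mtrace_def using X0c by (simp add: X0idx)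
    also have "\<dots> = mtrace X - of_nat n * cn" using Xc unfolding mtrace_def by (simp add: sum_subtractf)
    also have "of_nat n * cn = complex_of_real t"
    proof -
      have "real n * (t / real n) = t" using n by simp
      thus ?thesis unfolding cn_def by (metis of_real_mult of_real_of_nat_eq)
    qed
    finally show ?thesis using trX by simp
  qed
  have X0h0: "X0 \<in> Herm0 n" using X0h trX0 unfolding Herm0_def by simp
  have P: "complex_of_real (1 / real n) \<cdot>\<^sub>m 1\<^sub>m n \<in> Herm n" by (rule HermI) auto
  have Xeq: "X = complex_of_real t \<cdot>\<^sub>m (complex_of_real (1 / real n) \<cdot>\<^sub>m 1\<^sub>m n) + complex_of_real 1 \<cdot>\<^sub>m X0"
    using Xc X0c by (intro eq_matI) (auto simp: X0idx cn_def)
  define Z where "Z = \<Phi> X0"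
  have Zc: "Z \<in> carrier_mat k k" using phi_carrier[OF lin X0h] unfolding Z_def .
  have trZ: "mtrace Z = 0" using tp X0h trX0 unfolding trace_preserving_def Z_def by simp
  have "\<Phi> X = \<Phi> (complex_of_real t \<cdot>\<^sub>m (complex_of_real (1 / real n) \<cdot>\<^sub>m 1\<^sub>m n) + complex_of_real 1 \<cdot>\<^sub>m X0)"
    using Xeq by simp
  also have "\<dots> = complex_of_real t \<cdot>\<^sub>m \<Phi> (complex_of_real (1 / real n) \<cdot>\<^sub>m 1\<^sub>m n) + complex_of_real 1 \<cdot>\<^sub>m \<Phi> X0"
    by (rule phi_lin[OF lin P X0h])
  also have "\<dots> = complex_of_real t \<cdot>\<^sub>m (complex_of_real (1 / real k) \<cdot>\<^sub>m 1\<^sub>m k) + complex_of_real 1 \<cdot>\<^sub>m Z"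
    using un unfolding unital_def Z_def by simp
  finally have PX: "\<Phi> X = \<dots>" .
  have PXidx: "\<And>p q. p < k \<Longrightarrow> q < k \<Longrightarrow> \<Phi> X $$ (p,q) = (if p = q then ck else 0) + Z$$(p,q)"
    unfolding PX ck_def using Zc by auto
  have PXc: "\<Phi> X \<in> carrier_mat k k" using phi_carrier[OF lin X] .
  have Xidx: "\<And>p q. p < n \<Longrightarrow> q < n \<Longrightarrow> X $$ (p,q) = (if p = q then cn else 0) + X0$$(p,q)"
    by (simp add: X0idx)
  have "mtrace (\<Phi> X * \<Phi> X) = (\<Sum>p<k. \<Sum>q<k. ((if p = q then ck else 0) + Z$$(p,q)) * ((if q = p then ck else 0) + Z$$(q,p)))"
    unfolding mtrace_mult[OF PXc PXc] by (intro sum.cong refl) (simp add: PXidx)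
  also have "\<dots> = of_nat k * ck^2 + 2 * ck * (\<Sum>p<k. Z$$(p,p)) + (\<Sum>p<k. \<Sum>q<k. Z$$(p,q) * Z$$(q,p))"
    by (rule delta_sum)
  also have "(\<Sum>p<k. Z$$(p,p)) = 0" using trZ Zc unfolding mtrace_def by simp
  also have "(\<Sum>p<k. \<Sum>q<k. Z$$(p,q) * Z$$(q,p)) = mtrace (Z * Z)" using mtrace_mult[OF Zc Zc] by simp
  finally have E1: "Re (mtrace (\<Phi> X * \<Phi> X)) = real k * (t / real k)^2 + Re (mtrace (Z * Z))"
    unfolding ck_def by simp
  have "mtrace (X * X) = (\<Sum>p<n. \<Sum>q<n. ((if p = q then cn else 0) + X0$$(p,q)) * ((if q = p then cn else 0) + X0$$(q,p)))"
    unfolding mtrace_mult[OF Xc Xc] by (intro sum.cong refl) (simp add: Xidx)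
  also have "\<dots> = of_nat n * cn^2 + 2 * cn * (\<Sum>p<n. X0$$(p,p)) + (\<Sum>p<n. \<Sum>q<n. X0$$(p,q) * X0$$(q,p))"
    by (rule delta_sum)
  also have "(\<Sum>p<n. X0$$(p,p)) = 0" using trX0 X0c unfolding mtrace_def by simp
  also have "(\<Sum>p<n. \<Sum>q<n. X0$$(p,q) * X0$$(q,p)) = mtrace (X0 * X0)" using mtrace_mult[OF X0c X0c] by simp
  finally have E2: "Re (mtrace (X * X)) = real n * (t / real n)^2 + Re (mtrace (X0 * X0))"
    unfolding cn_def by simp
  have B: "Re (mtrace (Z * Z)) \<le> lam * Re (mtrace (X0 * X0))"
    using herm0_bound[OF lin onb X0h0] unfolding Z_def lam_def .
  have k1: "real k * (t / real k)^2 = t^2 / real k" using k by (simp add: power2_eq_square)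
  have n1: "real n * (t / real n)^2 = t^2 / real n" using n by (simp add: power2_eq_square)
  have "(1 / real k - lam / real n) * t^2 + lam * (t^2 / real n + Re (mtrace (X0 * X0)))
       = t^2 / real k + lam * Re (mtrace (X0 * X0))" by (simp add: algebra_simps)
  thus ?thesis unfolding E1 E2 k1 n1 lam_def[symmetric] t_def[symmetric] using B by linarith
qed



lemma pair_bound:
  assumes n: "n > 0" and k: "k > 0" and lin: "herm_linear_map n k \<Phi>"
    and tp: "trace_preserving n \<Phi>" and un: "unital n k \<Phi>" and onb: "onb_Herm0 n M"
    and Xc: "X \<in> carrier_mat n n"
  shows "Re (mtrace (cext \<Phi> X * cext \<Phi> (adj X))) \<le> (1 / real k - lambda_max (A_mat n \<Phi> M) / real n) * Re (mtrace X * mtrace (adj X))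
      + lambda_max (A_mat n \<Phi> M) * Re (mtrace (X * adj X))"
proof -
  define lam where "lam = lambda_max (A_mat n \<Phi> M)"
  define H where "H = (1/2) \<cdot>\<^sub>m (X + adj X)"
  define K where "K = (1 / (2*\<i>)) \<cdot>\<^sub>m (X - adj X)"
  have adjc: "adj X \<in> carrier_mat n n" using Xc unfolding adj_def by auto
  have adjidx: "\<And>i j. i < n \<Longrightarrow> j < n \<Longrightarrow> adj X $$ (i,j) = cnj (X$$(j,i))" using Xc unfolding adj_def by auto
  have Hc: "H \<in> carrier_mat n n" unfolding H_def using Xc adjc by simp
  have Kc: "K \<in> carrier_mat n n" unfolding K_def using Xc adjc by (simp add: minus_carrier_mat)
  have Hidx: "\<And>i j. i < n \<Longrightarrow> j < n \<Longrightarrow> H$$(i,j) = 1/2 * (X$$(i,j) + cnj (X$$(j,i)))"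
    unfolding H_def using Xc adjc adjidx by simp
  have Kidx: "\<And>i j. i < n \<Longrightarrow> j < n \<Longrightarrow> K$$(i,j) = 1/(2*\<i>) * (X$$(i,j) - cnj (X$$(j,i)))"
    unfolding K_def using Xc adjc adjidx by simp
  have Hh: "H \<in> Herm n"
  proof (rule HermI[OF Hc])
    fix i j assume ij: "i < n" "j < n"
    show "H$$(i,j) = cnj (H$$(j,i))" unfolding Hidx[OF ij] Hidx[OF ij(2,1)] by simp
  qed
  have Kh: "K \<in> Herm n"
  proof (rule HermI[OF Kc])
    fix i j assume ij: "i < n" "j < n"
    show "K$$(i,j) = cnj (K$$(j,i))" unfolding Kidx[OF ij] Kidx[OF ij(2,1)] by (simp add: field_simps)
  qed
  have Xidx: "\<And>i j. i < n \<Longrightarrow> j < n \<Longrightarrow> X$$(i,j) = H$$(i,j) + \<i> * K$$(i,j)"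
    by (simp add: Hidx Kidx field_simps)
  have aXidx: "\<And>i j. i < n \<Longrightarrow> j < n \<Longrightarrow> adj X$$(i,j) = H$$(i,j) - \<i> * K$$(i,j)"
    by (simp add: Hidx Kidx adjidx field_simps)
  define PH where "PH = \<Phi> H"
  define PK where "PK = \<Phi> K"
  have PHc: "PH \<in> carrier_mat k k" unfolding PH_def by (rule phi_carrier[OF lin Hh])
  have PKc: "PK \<in> carrier_mat k k" unfolding PK_def by (rule phi_carrier[OF lin Kh])
  have c1: "cext \<Phi> X = PH + \<i> \<cdot>\<^sub>m PK" unfolding cext_def PH_def PK_def H_def K_def ..
  have aa: "adj (adj X) = X" using Xc adjc unfolding adj_def by (intro eq_matI) auto
  have H2: "(1/2) \<cdot>\<^sub>m (adj X + adj (adj X)) = H" unfolding aa H_def using Xc adjc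
    by (intro eq_matI) auto
  have K2: "(1 / (2*\<i>)) \<cdot>\<^sub>m (adj X - adj (adj X)) = complex_of_real (-1) \<cdot>\<^sub>m K" unfolding aa K_def using Xc adjc
    by (intro eq_matI) (auto simp: field_simps)
  have c2: "cext \<Phi> (adj X) = PH + \<i> \<cdot>\<^sub>m (complex_of_real (-1) \<cdot>\<^sub>m PK)"
    unfolding cext_def H2 K2 phi_smult[OF lin Kh] PH_def PK_def ..
  have c1idx: "\<And>p q. p < k \<Longrightarrow> q < k \<Longrightarrow> cext \<Phi> X $$ (p,q) = PH$$(p,q) + \<i> * PK$$(p,q)"
    unfolding c1 using PHc PKc by simp
  have c2idx: "\<And>p q. p < k \<Longrightarrow> q < k \<Longrightarrow> cext \<Phi> (adj X) $$ (p,q) = PH$$(p,q) - \<i> * PK$$(p,q)"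
    unfolding c2 using PHc PKc by simp
  have C1c: "cext \<Phi> X \<in> carrier_mat k k" unfolding c1 using PHc PKc by simp
  have C2c: "cext \<Phi> (adj X) \<in> carrier_mat k k" unfolding c2 using PHc PKc by simp
  have "mtrace (cext \<Phi> X * cext \<Phi> (adj X)) = (\<Sum>p<k. \<Sum>q<k. (PH$$(p,q) + \<i> * PK$$(p,q)) * (PH$$(q,p) - \<i> * PK$$(q,p)))"
    unfolding mtrace_mult[OF C1c C2c] by (intro sum.cong refl) (simp add: c1idx c2idx)
  also have "\<dots> = mtrace (PH * PH) + mtrace (PK * PK)"
    unfolding cross_sum mtrace_mult[OF PHc PHc] mtrace_mult[OF PKc PKc] ..
  finally have L: "Re (mtrace (cext \<Phi> X * cext \<Phi> (adj X))) = Re (mtrace (PH * PH)) + Re (mtrace (PK * PK))" by simp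
  have "mtrace (X * adj X) = (\<Sum>p<n. \<Sum>q<n. (H$$(p,q) + \<i> * K$$(p,q)) * (H$$(q,p) - \<i> * K$$(q,p)))"
    unfolding mtrace_mult[OF Xc adjc] by (intro sum.cong refl) (simp add: Xidx aXidx)
  also have "\<dots> = mtrace (H * H) + mtrace (K * K)"
    unfolding cross_sum mtrace_mult[OF Hc Hc] mtrace_mult[OF Kc Kc] ..
  finally have R2: "Re (mtrace (X * adj X)) = Re (mtrace (H * H)) + Re (mtrace (K * K))" by simp
  define h where "h = Re (mtrace H)"
  define g where "g = Re (mtrace K)"
  have trH: "mtrace H = complex_of_real h" using Herm_trace_real[OF Hh] unfolding h_def .
  have trK: "mtrace K = complex_of_real g" using Herm_trace_real[OF Kh] unfolding g_def .
  have "mtrace X = (\<Sum>p<n. H$$(p,p) + \<i> * K$$(p,p))" unfolding mtrace_def using Xc by (simp add: Xidx)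
  also have "\<dots> = mtrace H + \<i> * mtrace K" unfolding mtrace_def using Hc Kc by (simp add: sum.distrib sum_distrib_left)
  finally have tX: "mtrace X = complex_of_real h + \<i> * complex_of_real g" unfolding trH trK .
  have "mtrace (adj X) = (\<Sum>p<n. H$$(p,p) - \<i> * K$$(p,p))" unfolding mtrace_def using adjc by (simp add: aXidx)
  also have "\<dots> = mtrace H - \<i> * mtrace K" unfolding mtrace_def using Hc Kc by (simp add: sum_subtractf sum_distrib_left)
  finally have tA: "mtrace (adj X) = complex_of_real h - \<i> * complex_of_real g" unfolding trH trK .
  have R1: "Re (mtrace X * mtrace (adj X)) = h^2 + g^2" unfolding tX tA by (simp add: algebra_simps power2_eq_square)
  have BH: "Re (mtrace (PH * PH)) \<le> (1 / real k - lam / real n) * h^2 + lam * Re (mtrace (H * H))"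
    using herm_bound[OF n k lin tp un onb Hh] unfolding PH_def lam_def h_def .
  have BK: "Re (mtrace (PK * PK)) \<le> (1 / real k - lam / real n) * g^2 + lam * Re (mtrace (K * K))"
    using herm_bound[OF n k lin tp un onb Kh] unfolding PK_def lam_def g_def .
  show ?thesis unfolding L R1 R2 lam_def[symmetric] using BH BK by (simp add: algebra_simps)
qed



lemma idx_lt: "p < k \<Longrightarrow> a < m \<Longrightarrow> p * m + a < k * (m::nat)"
proof -
  assume p: "p < k" and a: "a < m"
  have "p * m + a < (p + 1) * m" using a by simp
  also have "(p + 1) * m \<le> k * m" using p by (intro mult_le_mono1) simp
  finally show ?thesis .
qed

lemma block_trace:
  fixes T :: "complex mat" and F :: "nat \<Rightarrow> nat \<Rightarrow> complex mat"
  assumes Tc: "T \<in> carrier_mat (k*m) (k*m)"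
    and Fc: "\<And>a b. F a b \<in> carrier_mat k k"
    and TF: "\<And>p a q b. p < k \<Longrightarrow> a < m \<Longrightarrow> q < k \<Longrightarrow> b < m \<Longrightarrow> T $$ (p*m+a, q*m+b) = F a b $$ (p,q)"
  shows "mtrace (T * T) = (\<Sum>a<m. \<Sum>b<m. mtrace (F a b * F b a))"
proof -
  have "mtrace (T*T) = (\<Sum>r<k*m. \<Sum>s<k*m. T$$(r,s) * T$$(s,r))" by (rule mtrace_mult[OF Tc Tc])
  also have "\<dots> = (\<Sum>p<k. \<Sum>a<m. \<Sum>q<k. \<Sum>b<m. T$$(p*m+a, q*m+b) * T$$(q*m+b, p*m+a))"
    by (simp add: reindex_sum)
  also have "\<dots> = (\<Sum>p<k. \<Sum>a<m. \<Sum>q<k. \<Sum>b<m. F a b $$ (p,q) * F b a $$ (q,p))"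
    by (intro sum.cong refl) (simp add: TF)
  also have "\<dots> = (\<Sum>a<m. \<Sum>p<k. \<Sum>q<k. \<Sum>b<m. F a b $$ (p,q) * F b a $$ (q,p))"
    by (rule sum.swap)
  also have "\<dots> = (\<Sum>a<m. \<Sum>p<k. \<Sum>b<m. \<Sum>q<k. F a b $$ (p,q) * F b a $$ (q,p))"
    by (rule sum.cong[OF refl], rule sum.cong[OF refl], rule sum.swap)
  also have "\<dots> = (\<Sum>a<m. \<Sum>b<m. \<Sum>p<k. \<Sum>q<k. F a b $$ (p,q) * F b a $$ (q,p))"
    by (rule sum.cong[OF refl], rule sum.swap)
  also have "\<dots> = (\<Sum>a<m. \<Sum>b<m. mtrace (F a b * F b a))"
    by (intro sum.cong refl) (simp add: mtrace_mult[OF Fc Fc])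
  finally show ?thesis .
qed

lemma cext_parts:
  assumes Xc: "X \<in> carrier_mat n n"
  shows "(1/2) \<cdot>\<^sub>m (X + adj X) \<in> Herm n" "(1 / (2*\<i>)) \<cdot>\<^sub>m (X - adj X) \<in> Herm n"
proof -
  define H where "H = (1/2) \<cdot>\<^sub>m (X + adj X)"
  define K where "K = (1 / (2*\<i>)) \<cdot>\<^sub>m (X - adj X)"
  have adjc: "adj X \<in> carrier_mat n n" using Xc unfolding adj_def by auto
  have adjidx: "\<And>i j. i < n \<Longrightarrow> j < n \<Longrightarrow> adj X $$ (i,j) = cnj (X$$(j,i))" using Xc unfolding adj_def by auto
  have Hc: "H \<in> carrier_mat n n" unfolding H_def using Xc adjc by simp
  have Kc: "K \<in> carrier_mat n n" unfolding K_def using Xc adjc by (simp add: minus_carrier_mat)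
  have Hidx: "\<And>i j. i < n \<Longrightarrow> j < n \<Longrightarrow> H$$(i,j) = 1/2 * (X$$(i,j) + cnj (X$$(j,i)))"
    unfolding H_def using Xc adjc adjidx by simp
  have Kidx: "\<And>i j. i < n \<Longrightarrow> j < n \<Longrightarrow> K$$(i,j) = 1/(2*\<i>) * (X$$(i,j) - cnj (X$$(j,i)))"
    unfolding K_def using Xc adjc adjidx by simp
  show "(1/2) \<cdot>\<^sub>m (X + adj X) \<in> Herm n" unfolding H_def[symmetric]
  proof (rule HermI[OF Hc])
    fix i j assume ij: "i < n" "j < n"
    show "H$$(i,j) = cnj (H$$(j,i))" unfolding Hidx[OF ij] Hidx[OF ij(2,1)] by simp
  qed
  show "(1 / (2*\<i>)) \<cdot>\<^sub>m (X - adj X) \<in> Herm n" unfolding K_def[symmetric]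
  proof (rule HermI[OF Kc])
    fix i j assume ij: "i < n" "j < n"
    show "K$$(i,j) = cnj (K$$(j,i))" unfolding Kidx[OF ij] Kidx[OF ij(2,1)] by (simp add: field_simps)
  qed
qed

lemma cext_carrier:
  assumes lin: "herm_linear_map n k \<Phi>" and Xc: "X \<in> carrier_mat n n"
  shows "cext \<Phi> X \<in> carrier_mat k k"
  using phi_carrier[OF lin cext_parts(1)[OF Xc]] phi_carrier[OF lin cext_parts(2)[OF Xc]]
  unfolding cext_def by simp

theorem lemma8:
  fixes n k m :: nat and \<Phi> :: "complex mat \<Rightarrow> complex mat" and \<rho> :: "complex mat"
    and M :: "nat \<Rightarrow> complex mat"
  assumes "n > 0" and "k > 0" and "m > 0"
    and "herm_linear_map n k \<Phi>"
    and "trace_preserving n \<Phi>"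
    and "unital n k \<Phi>"
    and "\<rho> \<in> Herm (n * m)"
    and "onb_Herm0 n M"
  shows "Re (mtrace (tensor_id n k m \<Phi> \<rho> * tensor_id n k m \<Phi> \<rho>))
     \<le> (1 / real k - lambda_max (A_mat n \<Phi> M) / real n) * Re (mtrace (ptrace1 n m \<rho> * ptrace1 n m \<rho>))
       + lambda_max (A_mat n \<Phi> M) * Re (mtrace (\<rho> * \<rho>))"
proof -
  note n = assms(1) and k = assms(2) and lin = assms(4) and tp = assms(5) and un = assms(6)
    and rh = assms(7) and onb = assms(8)
  define lam where "lam = lambda_max (A_mat n \<Phi> M)"
  define c1 where "c1 = 1 / real k - lam / real n"
  have rc: "\<rho> \<in> carrier_mat (n*m) (n*m)" using HermD(1)[OF rh] .
  define B where "B = (\<lambda>a b. block2 n m \<rho> a b)"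
  have Bc: "\<And>a b. B a b \<in> carrier_mat n n" unfolding B_def block2_def by simp
  have Bidx: "\<And>a b i j. i < n \<Longrightarrow> j < n \<Longrightarrow> B a b $$ (i,j) = \<rho> $$ (i*m+a, j*m+b)"
    unfolding B_def block2_def by simp
  have Badj: "B b a = adj (B a b)" if ab: "a < m" "b < m" for a b
  proof (rule eq_matI)
    fix i j assume "i < dim_row (adj (B a b))" "j < dim_col (adj (B a b))"
    hence ij: "i < n" "j < n" using Bc[of a b] unfolding adj_def by auto
    have "B b a $$ (i,j) = \<rho> $$ (i*m+b, j*m+a)" by (rule Bidx[OF ij])
    also have "\<dots> = cnj (\<rho> $$ (j*m+a, i*m+b))"
      by (rule HermD(2)[OF rh]) (use idx_lt ij ab in auto)
    also have "\<dots> = cnj (B a b $$ (j,i))" using Bidx[OF ij(2,1)] by simp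
    also have "\<dots> = adj (B a b) $$ (i,j)" using Bc[of a b] ij unfolding adj_def by simp
    finally show "B b a $$ (i,j) = adj (B a b) $$ (i,j)" .
  qed (use Bc[of a b] Bc[of b a] in \<open>auto simp: adj_def\<close>)
  define C where "C = (\<lambda>a b. cext \<Phi> (B a b))"
  have Cc: "\<And>a b. C a b \<in> carrier_mat k k" unfolding C_def by (rule cext_carrier[OF lin Bc])
  define T where "T = tensor_id n k m \<Phi> \<rho>"
  have Tc: "T \<in> carrier_mat (k*m) (k*m)" unfolding T_def tensor_id_def by simp
  have Tidx: "T $$ (p*m+a, q*m+b) = C a b $$ (p,q)" if "p < k" "a < m" "q < k" "b < m" for p a q b
  proof -
    have l: "p*m+a < k*m" "q*m+b < k*m" using idx_lt that by auto
    have "(p*m+a) mod m = a" "(p*m+a) div m = p" "(q*m+b) mod m = b" "(q*m+b) div m = q"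
      using that by auto
    thus ?thesis unfolding T_def tensor_id_def C_def B_def using l by simp
  qed
  have LT: "mtrace (T * T) = (\<Sum>a<m. \<Sum>b<m. mtrace (C a b * C b a))"
    by (rule block_trace[OF Tc Cc Tidx])
  have LR: "mtrace (\<rho> * \<rho>) = (\<Sum>a<m. \<Sum>b<m. mtrace (B a b * B b a))"
    by (rule block_trace[OF rc Bc]) (simp add: Bidx)
  define P where "P = ptrace1 n m \<rho>"
  have Pc: "P \<in> carrier_mat m m" unfolding P_def ptrace1_def by simp
  have Pidx: "\<And>a b. a < m \<Longrightarrow> b < m \<Longrightarrow> P $$ (a,b) = mtrace (B a b)"
  proof -
    fix a b assume ab: "a < m" "b < m"
    have "dim_row (B a b) = n" unfolding B_def block2_def by simp
    thus "P $$ (a,b) = mtrace (B a b)" unfolding P_def ptrace1_def mtrace_def using ab by (simp add: Bidx)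
  qed
  have LP: "mtrace (P * P) = (\<Sum>a<m. \<Sum>b<m. mtrace (B a b) * mtrace (B b a))"
    unfolding mtrace_mult[OF Pc Pc] by (intro sum.cong refl) (simp add: Pidx)
  have each: "Re (mtrace (C a b * C b a)) \<le> c1 * Re (mtrace (B a b) * mtrace (B b a)) + lam * Re (mtrace (B a b * B b a))"
    if ab: "a < m" "b < m" for a b
    using pair_bound[OF n k lin tp un onb Bc[of a b]] unfolding C_def Badj[OF ab] c1_def lam_def .
  have "Re (mtrace (T * T)) = (\<Sum>a<m. \<Sum>b<m. Re (mtrace (C a b * C b a)))"
    unfolding LT by (simp add: Re_sum)
  also have "\<dots> \<le> (\<Sum>a<m. \<Sum>b<m. c1 * Re (mtrace (B a b) * mtrace (B b a)) + lam * Re (mtrace (B a b * B b a)))"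
    by (intro sum_mono each) auto
  also have "\<dots> = c1 * Re (mtrace (P * P)) + lam * Re (mtrace (\<rho> * \<rho>))"
    unfolding LP LR by (simp add: Re_sum sum.distrib sum_distrib_left)
  finally show ?thesis unfolding T_def P_def c1_def lam_def .
qed


end
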